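(* Let $N(x)=\frac{1}{\sqrt{2\pi}}\int_{-\infty}^x e^{-t^2/2}\,dt$ be the standard normal cumulative distribution function. For $\alpha>0$ define the standardized call function $\chi_\alpha:(0,+\infty)\to\mathbb{R}$ by \[ \chi_\alpha(x) := N\Big(\tfrac{\alpha}{2}\big(x-\tfrac{1}{x}\big)\Big) - e^{\alpha^2/2}\, N\Big(-\tfrac{\alpha}{2}\big(x+\tfrac{1}{x}\big)\Big), \qquad x>0. \] Then for every $\alpha>0$: (i) $\lim_{x\to 0^+}\chi_\alpha(x)=0$ and $\lim_{x\to+\infty}\chi_\alpha(x)=1$; (ii) $\chi_\alpha$ is strictly increasing on $(0,+\infty)$; (iii) $\chi_\alpha$ is strictly convex on $(0,1]$ and strictly concave on $[1,+\infty)$. *)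

theory Defs
  imports "HOL-Analysis.Analysis"
begin

definition normal_cdf :: "real \<Rightarrow> real" where
  "normal_cdf x = (1 / sqrt (2 * pi)) * integral {..x} (\<lambda>t. exp (- (t^2) / 2))"

definition chi :: "real \<Rightarrow> real \<Rightarrow> real" where
  "chi \<alpha> x = normal_cdf ((\<alpha> / 2) * (x - 1 / x))
              - exp (\<alpha>^2 / 2) * normal_cdf (- (\<alpha> / 2) * (x + 1 / x))"

definition strict_convex_on :: "real set \<Rightarrow> (real \<Rightarrow> real) \<Rightarrow> bool" where
  "strict_convex_on S f \<longleftrightarrow> convex S \<and>
     (\<forall>x\<in>S. \<forall>y\<in>S. \<forall>t. x \<noteq> y \<and> 0 < t \<and> t < 1 \<longrightarrow>
        f ((1 - t) * x + t * y) < (1 - t) * f x + t * f y)"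

definition strict_concave_on :: "real set \<Rightarrow> (real \<Rightarrow> real) \<Rightarrow> bool" where
  "strict_concave_on S f \<longleftrightarrow> strict_convex_on S (\<lambda>x. - f x)"

end

theory Submission imports Defs "HOL-Probability.Probability" "HOL-Real_Asymp.Real_Asymp" begin

lemma snd_measure_integral:
  assumes [measurable]: "A \<in> sets borel"
  shows "measure std_normal_distribution A = integral A std_normal_density"
proof -
  have si: "set_integrable lborel A std_normal_density"
    unfolding set_integrable_def
    by (rule integrable_mult_indicator) auto
  have "measure std_normal_distribution A = integral\<^sup>L std_normal_distribution (indicator A)"
    by (simp add: integral_indicator)
  also have "\<dots> = integral\<^sup>L lborel (\<lambda>x. std_normal_density x *\<^sub>R indicator A x)"
    by (rule integral_density) auto
  also have "\<dots> = (LINT x:A|lborel. std_normal_density x)"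
    unfolding set_lebesgue_integral_def by (simp add: mult.commute)
  also have "\<dots> = integral A std_normal_density"
    using set_borel_integral_eq_integral(2)[OF si] .
  finally show ?thesis .
qed

lemma normal_cdf_eq: "normal_cdf x = cdf std_normal_distribution x"
proof -
  have "cdf std_normal_distribution x = integral {..x} std_normal_density"
    by (simp add: cdf_def snd_measure_integral)
  also have "\<dots> = integral {..x} (\<lambda>t. (1 / sqrt (2 * pi)) * exp (- (t^2) / 2))"
    by (rule arg_cong[where f="integral {..x}"]) (rule ext, simp add: std_normal_density_def)
  also have "\<dots> = normal_cdf x"
    unfolding normal_cdf_def by simp
  finally show ?thesis by simp
qed

lemma normal_cdf_at_top: "(normal_cdf \<longlongrightarrow> 1) at_top"
  unfolding normal_cdf_eq[abs_def]
  using real_distribution.cdf_lim_at_top_prob[OF real_dist_normal_dist] .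

lemma normal_cdf_at_bot: "(normal_cdf \<longlongrightarrow> 0) at_bot"
  unfolding normal_cdf_eq[abs_def]
  using finite_borel_measure.cdf_lim_at_bot real_distribution.finite_borel_measure_M[OF real_dist_normal_dist] by blast

lemma normal_cdf_diff:
  assumes "a \<le> b"
  shows "normal_cdf b = normal_cdf a + integral {a..b} std_normal_density"
proof (cases "a = b")
  case True then show ?thesis by simp
next
  case False
  then have "a < b" using assms by simp
  have "normal_cdf b - normal_cdf a = measure std_normal_distribution {a<..b}"
    unfolding normal_cdf_eq
    using finite_borel_measure.cdf_diff_eq[OF real_distribution.finite_borel_measure_M[OF real_dist_normal_dist] \<open>a<b\<close>] .
  also have "\<dots> = integral {a<..b} std_normal_density"
    by (simp add: snd_measure_integral)
  also have "\<dots> = integral {a..b} std_normal_density"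
    by (rule integral_spike_set) (auto intro: negligible_subset[of "{a}"])
  finally show ?thesis by simp
qed

lemma normal_cdf_deriv: "(normal_cdf has_real_derivative std_normal_density x) (at x)"
proof -
  have c: "continuous_on {x-1..x+1} std_normal_density"
    unfolding std_normal_density_def by (intro continuous_intros) auto
  have "((\<lambda>u. integral {x-1..u} std_normal_density) has_real_derivative std_normal_density x) (at x within {x-1..x+1})"
    by (rule integral_has_real_derivative[OF c]) auto
  then have "((\<lambda>u. normal_cdf (x-1) + integral {x-1..u} std_normal_density) has_real_derivative std_normal_density x) (at x within {x-1..x+1})"
    by (intro derivative_eq_intros) auto
  then have "(normal_cdf has_real_derivative std_normal_density x) (at x within {x-1..x+1})"
    by (rule has_field_derivative_transform_within[where d=1]) (auto simp: normal_cdf_diff dist_real_def)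
  then show ?thesis by (simp add: at_within_Icc_at)
qed

lemmas normal_cdf_deriv_chain[derivative_intros] = normal_cdf_deriv[THEN DERIV_chain2]

definition dchi :: "real \<Rightarrow> real \<Rightarrow> real" where
  "dchi \<alpha> x = \<alpha> * std_normal_density (\<alpha> / 2 * (x - 1 / x))"

lemma key_exp:
  assumes "x \<noteq> 0"
  shows "exp (\<alpha>^2/2) * std_normal_density (- (\<alpha> / 2) * (x + 1 / x)) = std_normal_density (\<alpha> / 2 * (x - 1 / x))"
proof -
  have "\<alpha>^2/2 + (- ((- (\<alpha> / 2) * (x + 1 / x))^2) / 2) = - ((\<alpha> / 2 * (x - 1 / x))^2) / 2"
    using assms by (simp add: field_simps power2_eq_square)
  then have "exp (\<alpha>^2/2) * exp (- ((- (\<alpha> / 2) * (x + 1 / x))^2) / 2) = exp (- ((\<alpha> / 2 * (x - 1 / x))^2) / 2)"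
    by (metis exp_add)
  then show ?thesis unfolding std_normal_density_def by (metis mult.left_commute)
qed

lemma chi_deriv:
  assumes "x > 0"
  shows "(chi \<alpha> has_real_derivative dchi \<alpha> x) (at x)"
proof -
  have eq: "(\<lambda>x. chi \<alpha> x) = (\<lambda>x. normal_cdf ((\<alpha> / 2) * (x - 1 / x))
              - exp (\<alpha>^2 / 2) * normal_cdf (- (\<alpha> / 2) * (x + 1 / x)))"
    by (simp add: chi_def[abs_def])
  have "((\<lambda>x. normal_cdf ((\<alpha> / 2) * (x - 1 / x))
              - exp (\<alpha>^2 / 2) * normal_cdf (- (\<alpha> / 2) * (x + 1 / x))) has_real_derivative
     std_normal_density (\<alpha> / 2 * (x - 1 / x)) * (\<alpha>/2 * (1 + 1/x^2))
     - (exp (\<alpha>^2/2) * std_normal_density (- (\<alpha> / 2) * (x + 1 / x))) * (- (\<alpha>/2) * (1 - 1/x^2))) (at x)"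
    using assms
    by (auto intro!: derivative_eq_intros simp: field_simps power2_eq_square)
  also have "std_normal_density (\<alpha> / 2 * (x - 1 / x)) * (\<alpha>/2 * (1 + 1/x^2))
     - (exp (\<alpha>^2/2) * std_normal_density (- (\<alpha> / 2) * (x + 1 / x))) * (- (\<alpha>/2) * (1 - 1/x^2)) = dchi \<alpha> x"
    unfolding key_exp[OF less_imp_neq[OF assms, symmetric]] dchi_def by (simp add: field_simps)
  finally show ?thesis using eq by simp
qed

lemma strict_convex_core:
  fixes f f' :: "real \<Rightarrow> real"
  assumes S: "convex S" and d: "\<And>x. x\<in>S \<Longrightarrow> (f has_real_derivative f' x) (at x)"
    and m: "\<And>x y. x\<in>S \<Longrightarrow> y\<in>S \<Longrightarrow> x<y \<Longrightarrow> f' x < f' y"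
    and xy: "x \<in> S" "y \<in> S" "x < y" and t: "0 < t" "t < 1"
  shows "f ((1 - t) * x + t * y) < (1 - t) * f x + t * f y"
proof -
  define z where "z = (1 - t) * x + t * y"
  have zx: "z - x = t * (y - x)" and yz: "y - z = (1 - t) * (y - x)"
    unfolding z_def by (simp_all add: algebra_simps)
  have p1: "0 < t * (y - x)" and p2: "0 < (1 - t) * (y - x)" using t xy by auto
  have "x < z" using zx p1 by linarith
  have "z < y" using yz p2 by linarith
  have inS: "w \<in> S" if "x \<le> w" "w \<le> y" for w
    using connectedD_interval[OF convex_connected[OF S] xy(1,2) that] .
  obtain a where a: "x < a" "a < z" "f z - f x = (z - x) * f' a"
    using MVT2[OF \<open>x<z\<close>, of f f'] d inS \<open>z<y\<close> by force
  obtain b where b: "z < b" "b < y" "f y - f z = (y - z) * f' b"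
    using MVT2[OF \<open>z<y\<close>, of f f'] d inS \<open>x<z\<close> by force
  have ab: "f' a < f' b" using m inS a b by auto
  have pos: "0 < t * (1 - t) * (y - x)" using t xy by auto
  have "(t * (1 - t) * (y - x)) * f' a < (t * (1 - t) * (y - x)) * f' b"
    using mult_strict_left_mono[OF ab pos] .
  moreover have e1: "(1 - t) * (f z - f x) = (t * (1 - t) * (y - x)) * f' a"
    unfolding a(3) zx by (simp add: algebra_simps)
  moreover have e2: "t * (f y - f z) = (t * (1 - t) * (y - x)) * f' b"
    unfolding b(3) yz by (simp add: algebra_simps)
  ultimately have "(1 - t) * (f z - f x) < t * (f y - f z)" by (simp only: e1 e2)
  then have "f z < (1 - t) * f x + t * f y" by (simp add: algebra_simps)
  then show ?thesis by (simp add: z_def)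
qed

lemma strict_convex_from_deriv:
  fixes f f' :: "real \<Rightarrow> real"
  assumes S: "convex S" and d: "\<And>x. x\<in>S \<Longrightarrow> (f has_real_derivative f' x) (at x)"
    and m: "\<And>x y. x\<in>S \<Longrightarrow> y\<in>S \<Longrightarrow> x<y \<Longrightarrow> f' x < f' y"
  shows "strict_convex_on S f"
  unfolding strict_convex_on_def
proof (intro conjI S ballI allI impI)
  fix x y :: real and t :: real assume xy: "x \<in> S" "y \<in> S" and h: "x \<noteq> y \<and> 0 < t \<and> t < 1"
  show "f ((1 - t) * x + t * y) < (1 - t) * f x + t * f y"
  proof (cases "x < y")
    case True then show ?thesis using strict_convex_core[OF S d m xy] h by blast
  next
    case False
    then have "y < x" using h by auto
    have "f ((1 - (1 - t)) * y + (1 - t) * x) < (1 - (1 - t)) * f y + (1 - t) * f x"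
      by (rule strict_convex_core[OF S d m xy(2,1) \<open>y<x\<close>]) (use h in auto)
    then show ?thesis by (simp add: algebra_simps)
  qed
qed

lemma dchi_pos: "\<alpha> > 0 \<Longrightarrow> dchi \<alpha> x > 0"
  unfolding dchi_def std_normal_density_def by simp

lemma dchi_less:
  assumes "\<alpha> > 0" "\<bar>y - 1 / y\<bar> < \<bar>x - 1 / x\<bar>"
  shows "dchi \<alpha> x < dchi \<alpha> y"
proof -
  have "(y - 1 / y)^2 < (x - 1 / x)^2" using assms(2)
    by (metis abs_ge_zero abs_power2 power_strict_mono power2_abs zero_less_numeral)
  then have "(\<alpha> / 2 * (y - 1 / y))^2 < (\<alpha> / 2 * (x - 1 / x))^2"
    using assms(1) unfolding power_mult_distrib[of "\<alpha>/2"] by (intro mult_strict_left_mono) auto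
  then have "exp (- ((\<alpha> / 2 * (x - 1 / x))^2) / 2) < exp (- ((\<alpha> / 2 * (y - 1 / y))^2) / 2)"
    by simp
  then have "(1 / sqrt (2 * pi)) * exp (- ((\<alpha> / 2 * (x - 1 / x))^2) / 2) < (1 / sqrt (2 * pi)) * exp (- ((\<alpha> / 2 * (y - 1 / y))^2) / 2)"
    by (intro mult_strict_left_mono) auto
  from mult_strict_left_mono[OF this assms(1)] show ?thesis
    by (simp only: dchi_def std_normal_density_def)
qed

lemma w_mono: "0 < x \<Longrightarrow> x < y \<Longrightarrow> x - 1 / x < y - 1 / (y::real)"
proof -
  assume "0 < x" "x < y"
  then have "1 / y < 1 / x" by (simp add: frac_less2)
  then show ?thesis using \<open>x<y\<close> by linarith
qed

theorem proposition1:
  fixes \<alpha> :: real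
  assumes "\<alpha> > 0"
  shows "((chi \<alpha>) \<longlongrightarrow> 0) (at_right 0) \<and>
         ((chi \<alpha>) \<longlongrightarrow> 1) at_top \<and>
         strict_mono_on {0<..} (chi \<alpha>) \<and>
         strict_convex_on {0<..1} (chi \<alpha>) \<and>
         strict_concave_on {1..} (chi \<alpha>)"
proof (intro conjI)
  have eq: "chi \<alpha> = (\<lambda>x. normal_cdf ((\<alpha> / 2) * (x - 1 / x))
              - exp (\<alpha>^2 / 2) * normal_cdf (- (\<alpha> / 2) * (x + 1 / x)))"
    by (simp add: chi_def[abs_def])
  have l1: "filterlim (\<lambda>x. \<alpha>/2*(x-1/x)) at_bot (at_right 0)" using assms by real_asymp
  have l2: "filterlim (\<lambda>x. - (\<alpha>/2)*(x+1/x)) at_bot (at_right 0)" using assms by real_asymp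
  have l3: "filterlim (\<lambda>x. - (\<alpha>/2)*(x+1/x)) at_bot at_top" using assms by real_asymp
  have l4: "filterlim (\<lambda>x. (\<alpha>/2)*(x-1/x)) at_top at_top" using assms by real_asymp
  have "((\<lambda>x. normal_cdf ((\<alpha> / 2) * (x - 1 / x))
              - exp (\<alpha>^2 / 2) * normal_cdf (- (\<alpha> / 2) * (x + 1 / x))) \<longlongrightarrow> 0 - exp (\<alpha>^2 / 2) * 0) (at_right 0)"
    by (intro tendsto_diff tendsto_mult tendsto_const filterlim_compose[OF normal_cdf_at_bot] l1 l2)
  then show "((chi \<alpha>) \<longlongrightarrow> 0) (at_right 0)" unfolding eq by simp
  have "((\<lambda>x. normal_cdf ((\<alpha> / 2) * (x - 1 / x))
              - exp (\<alpha>^2 / 2) * normal_cdf (- (\<alpha> / 2) * (x + 1 / x))) \<longlongrightarrow> 1 - exp (\<alpha>^2 / 2) * 0) at_top"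
    by (intro tendsto_diff tendsto_mult tendsto_const filterlim_compose[OF normal_cdf_at_bot] 
          filterlim_compose[OF normal_cdf_at_top] l3 l4)
  then show "((chi \<alpha>) \<longlongrightarrow> 1) at_top" unfolding eq by simp
  show "strict_mono_on {0<..} (chi \<alpha>)"
  proof (rule strict_mono_onI)
    fix x y :: real assume "x \<in> {0<..}" "y \<in> {0<..}" "x < y"
    then obtain z where z: "x < z" "z < y" "chi \<alpha> y - chi \<alpha> x = (y - x) * dchi \<alpha> z"
      using MVT2[OF \<open>x<y\<close>, of "chi \<alpha>" "dchi \<alpha>"] chi_deriv by force
    have "0 < (y - x) * dchi \<alpha> z" using dchi_pos[OF assms] \<open>x<y\<close> by simp
    then show "chi \<alpha> x < chi \<alpha> y" using z by linarith
  qed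
  show "strict_convex_on {0<..1} (chi \<alpha>)"
  proof (rule strict_convex_from_deriv[where f'="dchi \<alpha>"])
    fix x y :: real assume "x \<in> {0<..1}" "y \<in> {0<..1}" "x < y"
    then have "0 < x" "0 < y" "y \<le> 1" by auto
    have a1: "x - 1 / x < y - 1 / y" using w_mono \<open>0<x\<close> \<open>x<y\<close> by blast
    have "1 \<le> 1 / y" using \<open>0<y\<close> \<open>y\<le>1\<close> by simp
    then have a2: "y - 1 / y \<le> 0" using \<open>y\<le>1\<close> by linarith
    from a1 a2 have "\<bar>y - 1 / y\<bar> < \<bar>x - 1 / x\<bar>" by linarith
    then show "dchi \<alpha> x < dchi \<alpha> y" by (rule dchi_less[OF assms])
  qed (auto intro: chi_deriv)
  show "strict_concave_on {1..} (chi \<alpha>)"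
    unfolding strict_concave_on_def
  proof (rule strict_convex_from_deriv[where f'="\<lambda>x. - dchi \<alpha> x"])
    fix x y :: real assume "x \<in> {1..}" "y \<in> {1..}" "x < y"
    then have "1 \<le> x" by auto
    then have "0 < x" by linarith
    have a1: "x - 1 / x < y - 1 / y" using w_mono \<open>0<x\<close> \<open>x<y\<close> by blast
    have "1 / x \<le> 1" using \<open>1\<le>x\<close> by simp
    then have a2: "0 \<le> x - 1 / x" using \<open>1\<le>x\<close> by linarith
    from a1 a2 have "\<bar>x - 1 / x\<bar> < \<bar>y - 1 / y\<bar>" by linarith
    then have "dchi \<alpha> y < dchi \<alpha> x" by (rule dchi_less[OF assms])
    then show "- dchi \<alpha> x < - dchi \<alpha> y" by simp
  qed (auto intro!: DERIV_minus chi_deriv)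
qed

end
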